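(* Let $n$ and $k\geq 2$ be positive integers, let $P=(p_1,\dots,p_k)$ be a probability distribution on $\{1,\dots,k\}$, let $X=(X_1,\dots,X_k)$ be multinomially distributed with $n$ samples and probabilities $P$, and let $V_{n,k,P}=D\big((X_1/n,\dots,X_k/n)\,\|\,(p_1,\dots,p_k)\big)$. Then for all real $\varepsilon>\frac{k-1}{n}$, \[ \Pr\big[V_{n,k,P}\geq \varepsilon\big]\leq e^{-n\varepsilon}\cdot\left(\frac{e\varepsilon n}{k-1}\right)^{k-1}. \]
   Context: For probability distributions $(q_1,\dots,q_k)$ and $(p_1,\dots,p_k)$ on a finite set, the Kullback--Leibler divergence is $D\big((q_1,\dots,q_k)\,\|\,(p_1,\dots,p_k)\big)=\sum_{i=1}^k q_i\log\frac{q_i}{p_i}$, with natural logarithm and the usual conventions $0\log(0/p)=0$. The quantity $V_{n,k,P}$ is the divergence from $P$ to the empirical distribution of $n$ i.i.d. samples from $P$. *)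

theory Defs
  imports "HOL-Analysis.Analysis"
begin

definition count_vectors :: "nat \<Rightarrow> nat \<Rightarrow> (nat \<Rightarrow> nat) set" where
  "count_vectors n k = {x. (\<forall>i. i \<notin> {1..k} \<longrightarrow> x i = 0) \<and> (\<Sum>i=1..k. x i) = n}"

definition multinomial_pmf :: "nat \<Rightarrow> nat \<Rightarrow> (nat \<Rightarrow> real) \<Rightarrow> (nat \<Rightarrow> nat) \<Rightarrow> real" where
  "multinomial_pmf n k p x =
     fact n / (\<Prod>i=1..k. fact (x i)) * (\<Prod>i=1..k. p i ^ x i)"

definition KL_div :: "nat \<Rightarrow> (nat \<Rightarrow> real) \<Rightarrow> (nat \<Rightarrow> real) \<Rightarrow> real" where
  "KL_div k q p = (\<Sum>i=1..k. if q i = 0 then 0 else q i * ln (q i / p i))"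

definition V_stat :: "nat \<Rightarrow> nat \<Rightarrow> (nat \<Rightarrow> real) \<Rightarrow> (nat \<Rightarrow> nat) \<Rightarrow> real" where
  "V_stat n k p x = KL_div k (\<lambda>i. real (x i) / real n) p"

definition prob_V_ge :: "nat \<Rightarrow> nat \<Rightarrow> (nat \<Rightarrow> real) \<Rightarrow> real \<Rightarrow> real" where
  "prob_V_ge n k p eps =
     (\<Sum>x\<in>count_vectors n k. if V_stat n k p x \<ge> eps then multinomial_pmf n k p x else 0)"

end

theory Submission
  imports Defs
begin

definition ffr :: "nat \<Rightarrow> nat \<Rightarrow> real" where
  "ffr N l = (if l \<le> N then fact N / fact (N - l) else 0)"

lemma fd_step:
  fixes f :: "nat \<Rightarrow> real"
  shows "(\<Sum>m\<le>Suc N. real (Suc N choose m) * (-1)^m * f m) =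
     (\<Sum>m\<le>N. real (N choose m) * (-1)^m * f m) - (\<Sum>m\<le>N. real (N choose m) * (-1)^m * f (Suc m))"
proof -
  have "(\<Sum>m\<le>Suc N. real (Suc N choose m) * (-1)^m * f m) =
     f 0 + (\<Sum>m\<le>N. real (Suc N choose Suc m) * (-1)^Suc m * f (Suc m))"
    by (subst sum.atMost_Suc_shift) simp
  also have "\<dots> = f 0 - (\<Sum>m\<le>N. real (N choose m) * (-1)^m * f (Suc m))
      - (\<Sum>m\<le>N. real (N choose Suc m) * (-1)^m * f (Suc m))"
    by (simp add: sum.distrib sum_subtractf algebra_simps sum_negf)
  also have "(\<Sum>m\<le>N. real (N choose Suc m) * (-1)^m * f (Suc m)) =
      (\<Sum>m<N. real (N choose Suc m) * (-1)^m * f (Suc m))"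
    by (simp add: lessThan_Suc_atMost[symmetric])
  also have "(\<Sum>m\<le>N. real (N choose m) * (-1)^m * f m) =
      f 0 - (\<Sum>m<N. real (N choose Suc m) * (-1)^m * f (Suc m))"
    by (subst sum.atMost_shift) (simp add: sum_negf)
  ultimately show ?thesis by simp
qed

lemma fd:
  fixes x z :: real
  shows "\<forall>x j. j \<le> N \<longrightarrow> (\<Sum>m\<le>N. real (N choose m) * (-1)^m * (x + z * real m)^j) =
      (if j = N then (-1)^N * fact N * z^N else 0)"
proof (induction N)
  case 0
  then show ?case by simp
next
  case (Suc N)
  show ?case
  proof (intro allI impI)
    fix x :: real and j :: nat
    assume j: "j \<le> Suc N"
    define D where "D i = (\<Sum>m\<le>N. real (N choose m) * (-1)^m * (x + z * real m)^i)" for i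
    have shift: "(\<Sum>m\<le>N. real (N choose m) * (-1)^m * (x + z * real (Suc m))^j) =
       (\<Sum>i\<le>j. real (j choose i) * z^(j-i) * D i)"
    proof -
      have "(\<Sum>m\<le>N. real (N choose m) * (-1)^m * (x + z * real (Suc m))^j) =
        (\<Sum>m\<le>N. real (N choose m) * (-1)^m * (\<Sum>i\<le>j. real (j choose i) * (x + z * real m)^i * z^(j-i)))"
      proof (intro sum.cong refl)
        fix m assume "m \<in> {..N}"
        have "(x + z * real (Suc m))^j = ((x + z * real m) + z)^j" by (simp add: algebra_simps)
        also have "\<dots> = (\<Sum>i\<le>j. real (j choose i) * (x + z * real m)^i * z^(j-i))"
          by (rule binomial_ring)
        finally show "real (N choose m) * (-1)^m * (x + z * real (Suc m))^j =
          real (N choose m) * (-1)^m * (\<Sum>i\<le>j. real (j choose i) * (x + z * real m)^i * z^(j-i))" by simp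
      qed
      also have "\<dots> = (\<Sum>i\<le>j. real (j choose i) * z^(j-i) * D i)"
        unfolding D_def by (simp add: sum_distrib_left sum_distrib_right mult_ac sum.swap[of _ "{..j}"])
      finally show ?thesis .
    qed
    have "(\<Sum>m\<le>Suc N. real (Suc N choose m) * (-1)^m * (x + z * real m)^j) =
       D j - (\<Sum>i\<le>j. real (j choose i) * z^(j-i) * D i)"
      using fd_step[of N "\<lambda>m. (x + z * real m)^j"] shift unfolding D_def by simp
    also have "\<dots> = - (\<Sum>i<j. real (j choose i) * z^(j-i) * D i)"
      by (simp add: lessThan_Suc_atMost[symmetric])
    also have "\<dots> = (if j = Suc N then (-1)^(Suc N) * fact (Suc N) * z^(Suc N) else 0)"
    proof (cases "j = Suc N")
      case True
      have "(\<Sum>i<j. real (j choose i) * z^(j-i) * D i) = real (Suc N) * z * D N"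
        unfolding True using Suc.IH unfolding D_def by (simp add: lessThan_Suc_atMost[symmetric])
      then show ?thesis using True Suc.IH unfolding D_def by (simp add: algebra_simps)
    next
      case False
      have "(\<Sum>i<j. real (j choose i) * z^(j-i) * D i) = 0"
        using Suc.IH j False unfolding D_def by (intro sum.neutral) auto
      then show ?thesis using False by simp
    qed
    finally show "(\<Sum>m\<le>Suc N. real (Suc N choose m) * (-1)^m * (x + z * real m)^j) =
      (if j = Suc N then (-1)^(Suc N) * fact (Suc N) * z^(Suc N) else 0)" .
  qed
qed

definition FA :: "real \<Rightarrow> nat \<Rightarrow> real \<Rightarrow> real \<Rightarrow> real" where
  "FA z N a b = (\<Sum>m\<le>N. real (N choose m) * (a + z * real m)^m * (b + z * real (N - m))^(N - m))"

definition GA :: "real \<Rightarrow> nat \<Rightarrow> real \<Rightarrow> real" where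
  "GA z N s = (\<Sum>l\<le>N. ffr N l * z^l * (s + real N * z)^(N - l))"

lemma DERIV_shift_pow:
  fixes b c d :: real
  shows "DERIV (\<lambda>b. c * (b + d)^e) b :> c * (real e * (b + d)^(e - 1))"
  by (auto intro!: derivative_eq_intros)

lemma ffr_Suc: "l \<le> N \<Longrightarrow> ffr (Suc N) l * real (Suc N - l) = real (Suc N) * ffr N l"
proof -
  assume l: "l \<le> N"
  then obtain d where d: "N = l + d" using le_Suc_ex by blast
  have e: "Suc N - l = Suc d" "N - l = d" using d by auto
  have "fact (Suc d) = real (Suc d) * (fact d :: real)" by simp
  moreover have "fact (Suc N) = real (Suc N) * (fact N :: real)" by simp
  ultimately show ?thesis using l unfolding ffr_def e by (simp del: of_nat_Suc fact_Suc)
qed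

lemma FA_deriv: "DERIV (\<lambda>b. FA z (Suc N) a b) b :> real (Suc N) * FA z N a (b + z)"
proof -
  have D: "DERIV (\<lambda>b. FA z (Suc N) a b) b :>
     (\<Sum>m\<le>Suc N. real (Suc N choose m) * (a + z * real m)^m * (real (Suc N - m) * (b + z * real (Suc N - m))^(Suc N - m - 1)))"
    unfolding FA_def by (intro DERIV_sum DERIV_shift_pow)
  have "(\<Sum>m\<le>Suc N. real (Suc N choose m) * (a + z * real m)^m * (real (Suc N - m) * (b + z * real (Suc N - m))^(Suc N - m - 1))) = (\<Sum>m\<le>N. real (Suc N choose m) * (a + z * real m)^m * (real (Suc N - m) * (b + z * real (Suc N - m))^(Suc N - m - 1)))"
    by simp
  also have "\<dots> = (\<Sum>m\<le>N. real (Suc N) * (real (N choose m) * (a + z * real m)^m * ((b + z) + z * real (N - m))^(N - m)))"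
  proof (intro sum.cong refl)
    fix m assume m: "m \<in> {..N}"
    have "(Suc N choose m) * (Suc N - m) = Suc N * (N choose m)"
      using binomial_absorb_comp[of "Suc N" m] by (simp add: mult.commute)
    then have e1: "real (Suc N choose m) * real (Suc N - m) = real (Suc N) * real (N choose m)"
      by (metis of_nat_mult)
    have e2: "b + z * real (Suc N - m) = (b + z) + z * real (N - m)" using m by (simp add: Suc_diff_le algebra_simps)
    have e3: "Suc N - m - 1 = N - m" by simp
    show "real (Suc N choose m) * (a + z * real m)^m * (real (Suc N - m) * (b + z * real (Suc N - m))^(Suc N - m - 1)) =
       real (Suc N) * (real (N choose m) * (a + z * real m)^m * ((b + z) + z * real (N - m))^(N - m))"
    proof -
      have "real (Suc N choose m) * (a + z * real m)^m * (real (Suc N - m) * ((b + z) + z * real (N - m))^(N - m))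
        = (real (Suc N choose m) * real (Suc N - m)) * ((a + z * real m)^m * ((b + z) + z * real (N - m))^(N - m))"
        by (simp only: ac_simps)
      also have "\<dots> = real (Suc N) * real (N choose m) * ((a + z * real m)^m * ((b + z) + z * real (N - m))^(N - m))"
        by (simp only: e1)
      finally show ?thesis unfolding e2 e3 by (simp only: ac_simps)
    qed
  qed
  also have "\<dots> = real (Suc N) * FA z N a (b + z)" unfolding FA_def by (simp add: sum_distrib_left)
  finally show ?thesis using D by simp
qed

lemma GA_deriv: "DERIV (\<lambda>b. GA z (Suc N) (a + b)) b :> real (Suc N) * GA z N (a + b + z)"
proof -
  have D: "DERIV (\<lambda>b. GA z (Suc N) (a + b)) b :>
     (\<Sum>l\<le>Suc N. ffr (Suc N) l * z^l * (real (Suc N - l) * (b + (a + real (Suc N) * z))^(Suc N - l - 1)))"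
    unfolding GA_def by (intro DERIV_sum) (auto intro!: derivative_eq_intros simp: algebra_simps)
  have "(\<Sum>l\<le>Suc N. ffr (Suc N) l * z^l * (real (Suc N - l) * (b + (a + real (Suc N) * z))^(Suc N - l - 1))) = (\<Sum>l\<le>N. ffr (Suc N) l * z^l * (real (Suc N - l) * (b + (a + real (Suc N) * z))^(Suc N - l - 1)))"
    by simp
  also have "\<dots> = (\<Sum>l\<le>N. real (Suc N) * (ffr N l * z^l * ((a + b + z) + real N * z)^(N - l)))"
  proof (intro sum.cong refl)
    fix l assume l: "l \<in> {..N}"
    have e2: "b + (a + real (Suc N) * z) = (a + b + z) + real N * z" by (simp add: algebra_simps)
    have e3: "Suc N - l - 1 = N - l" by simp
    show "ffr (Suc N) l * z^l * (real (Suc N - l) * (b + (a + real (Suc N) * z))^(Suc N - l - 1)) =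
       real (Suc N) * (ffr N l * z^l * ((a + b + z) + real N * z)^(N - l))"
    proof -
      have "ffr (Suc N) l * z^l * (real (Suc N - l) * ((a + b + z) + real N * z)^(N - l)) =
         (ffr (Suc N) l * real (Suc N - l)) * (z^l * ((a + b + z) + real N * z)^(N - l))" by (simp only: ac_simps)
      also have "\<dots> = real (Suc N) * ffr N l * (z^l * ((a + b + z) + real N * z)^(N - l))"
        using l by (simp only: ffr_Suc atMost_iff)
      finally show ?thesis unfolding e2 e3 by (simp only: ac_simps)
    qed
  qed
  also have "\<dots> = real (Suc N) * GA z N (a + b + z)" unfolding GA_def by (simp add: sum_distrib_left)
  finally show ?thesis using D by simp
qed

lemma FA_base: "FA z N a (- a - z * real N) = fact N * z^N"
proof -
  have "FA z N a (- a - z * real N) = (\<Sum>m\<le>N. (-1)^N * (real (N choose m) * (-1)^m * (a + z * real m)^N))"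
    unfolding FA_def
  proof (intro sum.cong refl)
    fix m assume m: "m \<in> {..N}"
    have e: "- a - z * real N + z * real (N - m) = - (a + z * real m)" using m by (simp add: of_nat_diff algebra_simps)
    have s: "(-1::real)^(N-m) = (-1)^N * (-1)^m"
    proof -
      have "(-1::real)^(N-m) * (-1)^m = (-1)^N" using m by (simp flip: power_add)
      moreover have "(-1::real)^m * (-1)^m = 1" by (simp flip: power_mult_distrib)
      ultimately show ?thesis by (metis mult.assoc mult.right_neutral)
    qed
    have p: "(a + z * real m)^m * (a + z * real m)^(N-m) = (a + z * real m)^N" using m by (simp flip: power_add)
    have "real (N choose m) * (a + z * real m)^m * ((-1)^N * (-1)^m * (a + z * real m)^(N-m)) =
        (-1)^N * (real (N choose m) * (-1)^m * ((a + z * real m)^m * (a + z * real m)^(N-m)))"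
      by (simp only: ac_simps)
    then show "real (N choose m) * (a + z * real m)^m * (- a - z * real N + z * real (N - m))^(N - m) =
        (-1)^N * (real (N choose m) * (-1)^m * (a + z * real m)^N)"
      unfolding e power_minus[of "a + z * real m"] s p by simp
  qed
  also have "\<dots> = (-1)^N * ((-1)^N * fact N * z^N)"
    using fd[of N z] by (simp add: sum_distrib_left[symmetric])
  also have "\<dots> = ((-1)^N * (-1)^N) * (fact N * z^N)" by (simp only: mult.assoc)
  also have "\<dots> = fact N * z^N" by (simp flip: power_mult_distrib)
  finally show ?thesis .
qed

lemma GA_base: "GA z N (- z * real N) = fact N * z^N"
proof -
  have "GA z N (- z * real N) = (\<Sum>l\<le>N. if l = N then fact N * z^N else 0)"
    unfolding GA_def by (intro sum.cong refl) (auto simp: ffr_def)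
  then show ?thesis by simp
qed

lemma Abel2: "FA z N a b = GA z N (a + b)"
proof (induction N arbitrary: a b)
  case 0
  then show ?case by (simp add: FA_def GA_def ffr_def)
next
  case (Suc N)
  have "\<forall>b. DERIV (\<lambda>b. FA z (Suc N) a b - GA z (Suc N) (a + b)) b :> 0"
  proof
    fix b
    have "DERIV (\<lambda>b. FA z (Suc N) a b - GA z (Suc N) (a + b)) b :> real (Suc N) * FA z N a (b + z) - real (Suc N) * GA z N (a + b + z)"
      by (intro DERIV_diff FA_deriv GA_deriv)
    then show "DERIV (\<lambda>b. FA z (Suc N) a b - GA z (Suc N) (a + b)) b :> 0"
      using Suc.IH[of a "b + z"] by (simp add: add.assoc)
  qed
  then have "FA z (Suc N) a b - GA z (Suc N) (a + b) =
    FA z (Suc N) a (- a - z * real (Suc N)) - GA z (Suc N) (a + (- a - z * real (Suc N)))"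
    by (rule DERIV_isconst_all)
  also have "\<dots> = 0" using FA_base[of z "Suc N" a] GA_base[of z "Suc N"] by simp
  finally show ?case by simp
qed


lemma cv_finite: "finite (count_vectors n k)"
proof -
  have "count_vectors n k \<subseteq> {f. \<forall>x. (x \<in> {1..k} \<longrightarrow> f x \<in> {..n}) \<and> (x \<notin> {1..k} \<longrightarrow> f x = 0)}"
  proof
    fix f assume f: "f \<in> count_vectors n k"
    have "\<forall>x. x \<in> {1..k} \<longrightarrow> f x \<le> n"
    proof (intro allI impI)
      fix x assume "x \<in> {1..k}"
      then have "f x \<le> (\<Sum>i=1..k. f i)" by (intro member_le_sum) auto
      then show "f x \<le> n" using f by (simp add: count_vectors_def)
    qed
    then show "f \<in> {f. \<forall>x. (x \<in> {1..k} \<longrightarrow> f x \<in> {..n}) \<and> (x \<notin> {1..k} \<longrightarrow> f x = 0)}"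
      using f by (auto simp: count_vectors_def)
  qed
  moreover have "finite {f. \<forall>x. (x \<in> {1..k} \<longrightarrow> f x \<in> {..n}) \<and> (x \<notin> {1..k} \<longrightarrow> (f x :: nat) = 0)}"
    by (rule finite_set_of_finite_funs) auto
  ultimately show ?thesis by (rule finite_subset)
qed

lemma cv_split:
  "(\<Sum>y\<in>count_vectors n (Suc k). f y) = (\<Sum>m\<le>n. \<Sum>x\<in>count_vectors (n-m) k. f (x(Suc k := m)))"
proof -
  have "(\<Sum>m\<le>n. \<Sum>x\<in>count_vectors (n-m) k. f (x(Suc k := m))) =
     (\<Sum>(m,x)\<in>Sigma {..n} (\<lambda>m. count_vectors (n-m) k). f (x(Suc k := m)))"
    by (rule sum.Sigma) (auto simp: cv_finite)
  moreover have "(\<Sum>y\<in>count_vectors n (Suc k). f y) = \<dots>"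
  proof (rule sum.reindex_bij_witness[where j = "\<lambda>y. (y (Suc k), y(Suc k := 0))" and i = "\<lambda>(m,x). x(Suc k := m)"])
    fix y assume y: "y \<in> count_vectors n (Suc k)"
    then have z: "\<forall>i. i \<notin> {1..Suc k} \<longrightarrow> y i = 0" and s: "(\<Sum>i=1..Suc k. y i) = n"
      by (auto simp: count_vectors_def)
    have s2: "(\<Sum>i=1..k. y i) + y (Suc k) = n" using s by simp
    have s3: "(\<Sum>i=1..k. (y(Suc k := 0)) i) = (\<Sum>i=1..k. y i)" by (intro sum.cong) auto
    show "(case (y (Suc k), y(Suc k := 0)) of (m, x) \<Rightarrow> x(Suc k := m)) = y" by auto
    show "(y (Suc k), y(Suc k := 0)) \<in> Sigma {..n} (\<lambda>m. count_vectors (n - m) k)"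
      using z s2 s3 by (auto simp: count_vectors_def)
    show "(case (y (Suc k), y(Suc k := 0)) of (m, x) \<Rightarrow> f (x(Suc k := m))) = f y" by auto
  next
    fix p assume p: "p \<in> Sigma {..n} (\<lambda>m. count_vectors (n - m) k)"
    obtain m x where pm: "p = (m, x)" by (cases p)
    have m: "m \<le> n" and x: "x \<in> count_vectors (n - m) k" using p pm by auto
    then have z: "\<forall>i. i \<notin> {1..k} \<longrightarrow> x i = 0" and s: "(\<Sum>i=1..k. x i) = n - m"
      by (auto simp: count_vectors_def)
    have s3: "(\<Sum>i=1..k. (x(Suc k := m)) i) = (\<Sum>i=1..k. x i)" by (intro sum.cong) auto
    have "x(Suc k := 0) = x" using z by auto
    then show "(case (case p of (m, x) \<Rightarrow> x(Suc k := m)) of y \<Rightarrow> (y (Suc k), y(Suc k := 0))) = p"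
      using pm by auto
    show "(case p of (m, x) \<Rightarrow> x(Suc k := m)) \<in> count_vectors n (Suc k)"
      using pm z s s3 m by (auto simp: count_vectors_def)
  qed
  ultimately show ?thesis by simp
qed

lemma cv_zero: "count_vectors N 0 = (if N = 0 then {\<lambda>_. 0} else {})"
  by (auto simp: count_vectors_def)

lemma ffr_mult: "j \<le> n \<Longrightarrow> ffr n j * ffr (n - j) l = ffr n (j + l)"
  by (auto simp: ffr_def)

lemma binom_ffr: assumes "m \<le> n" "j \<le> n" shows "real (n choose m) * ffr (n - m) j = ffr n j * real ((n - j) choose m)"
proof (cases "m \<le> n - j")
  case True
  then show ?thesis using assms
    by (simp add: ffr_def binomial_fact field_simps)
next
  case False
  then have "\<not> j \<le> n - m" using assms by arith
  then show ?thesis using False by (simp add: ffr_def)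
qed

lemma tri: "(\<Sum>j\<le>(n::nat). \<Sum>l\<le>n-j. h j (j + l)) = (\<Sum>s\<le>n. \<Sum>j\<le>s. (h j s :: real))"
proof -
  have "(\<Sum>j\<le>n. \<Sum>l\<le>n-j. h j (j + l)) = (\<Sum>(j,l)\<in>Sigma {..n} (\<lambda>j. {..n-j}). h j (j + l))"
    by (subst sum.Sigma) auto
  also have "Sigma {..n} (\<lambda>j. {..n-j}) = {(i,j). i + j \<le> n}" by auto
  also have "(\<Sum>(j,l)\<in>{(i,j). i + j \<le> n}. h j (j + l)) = (\<Sum>s\<le>n. \<Sum>j\<le>s. h j (j + (s - j)))"
    by (rule sum.triangle_reindex_eq)
  also have "\<dots> = (\<Sum>s\<le>n. \<Sum>j\<le>s. h j s)" by (intro sum.cong refl) auto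
  finally show ?thesis .
qed

lemma hockey: "k \<ge> 1 \<Longrightarrow> (\<Sum>j\<le>s. (j + k - 2) choose j) = (s + k - 1) choose s"
proof -
  assume k: "k \<ge> 1"
  show ?thesis
  proof (cases "k = 1")
    case True
    have "(\<Sum>j\<le>s. (j + k - 2) choose j) = (\<Sum>j\<le>s. if j = 0 then 1 else 0)"
      unfolding True by (intro sum.cong refl) auto
    then show ?thesis using True by simp
  next
    case False
    then obtain r where r: "k = r + 2" using k by (metis add.commute le_add_diff_inverse2 le_antisym not_less_eq_eq one_add_one plus_1_eq_Suc)
    show ?thesis unfolding r using sum_choose_lower[of r s] by (simp add: add.commute)
  qed
qed

definition Tsum :: "nat \<Rightarrow> nat \<Rightarrow> (nat \<Rightarrow> real) \<Rightarrow> real \<Rightarrow> real" where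
  "Tsum n k a z = (\<Sum>x\<in>count_vectors n k. fact n / (\<Prod>i=1..k. fact (x i)) * (\<Prod>i=1..k. (a i + z * real (x i))^(x i)))"

lemma T_term:
  assumes m: "m \<le> n"
  shows "fact n / (\<Prod>i=1..Suc k. fact ((x(Suc k:=m)) i)) * (\<Prod>i=1..Suc k. (a i + z * real ((x(Suc k:=m)) i))^((x(Suc k:=m)) i))
   = real (n choose m) * (a (Suc k) + z * real m)^m * (fact (n-m) / (\<Prod>i=1..k. fact (x i)) * (\<Prod>i=1..k. (a i + z*real (x i))^(x i)))"
proof -
  have p1: "(\<Prod>i=1..Suc k. fact ((x(Suc k:=m)) i)) = (\<Prod>i=1..k. fact (x i)) * (fact m :: real)"
    by (simp add: prod.cl_ivl_Suc)
  have p2: "(\<Prod>i=1..Suc k. (a i + z * real ((x(Suc k:=m)) i))^((x(Suc k:=m)) i)) =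
     (\<Prod>i=1..k. (a i + z*real (x i))^(x i)) * (a (Suc k) + z * real m)^m"
    by (simp add: prod.cl_ivl_Suc)
  have pos: "(\<Prod>i=1..k. fact (x i)) > (0::real)" by (intro prod_pos) auto
  have b: "real (n choose m) = fact n / (fact m * fact (n - m))" using binomial_fact[OF m] by simp
  show ?thesis unfolding p1 p2 b using pos by (simp add: field_simps)
qed

lemma Tid: "k \<ge> 1 \<Longrightarrow> Tsum n k a z =
   (\<Sum>j\<le>n. real ((j + k - 2) choose j) * ffr n j * z^j * ((\<Sum>i=1..k. a i) + real n * z)^(n-j))"
proof (induction k arbitrary: n)
  case 0
  then show ?case by simp
next
  case (Suc k)
  show ?case
  proof (cases "k = 0")
    case True
    have "Tsum n (Suc k) a z = (\<Sum>m\<le>n. \<Sum>x\<in>count_vectors (n-m) 0.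
       fact n / (\<Prod>i=1..Suc 0. fact ((x(Suc 0 := m)) i)) * (\<Prod>i=1..Suc 0. (a i + z * real ((x(Suc 0 := m)) i))^((x(Suc 0 := m)) i)))"
      unfolding Tsum_def True by (rule cv_split)
    also have "\<dots> = (\<Sum>m\<le>n. if m = n then (a 1 + z * real n)^n else 0)"
      by (intro sum.cong refl) (auto simp: cv_zero)
    also have "\<dots> = (a 1 + z * real n)^n" by simp
    finally have L: "Tsum n (Suc k) a z = (a 1 + z * real n)^n" .
    have "(\<Sum>j\<le>n. real ((j + Suc k - 2) choose j) * ffr n j * z^j * ((\<Sum>i=1..Suc k. a i) + real n * z)^(n-j))
       = (\<Sum>j\<le>n. if j = 0 then (a 1 + z * real n)^n else 0)"
      unfolding True by (intro sum.cong refl) (auto simp: ffr_def algebra_simps)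
    then show ?thesis using L by simp
  next
    case False
    then have k1: "k \<ge> 1" by simp
    define A' where "A' = (\<Sum>i=1..k. a i)"
    define c where "c j = real ((j + k - 2) choose j)" for j
    define u where "u m = (a (Suc k) + z * real m)^m" for m
    have "Tsum n (Suc k) a z = (\<Sum>m\<le>n. \<Sum>x\<in>count_vectors (n-m) k. real (n choose m) * u m *
       (fact (n-m) / (\<Prod>i=1..k. fact (x i)) * (\<Prod>i=1..k. (a i + z*real (x i))^(x i))))"
      unfolding Tsum_def cv_split u_def
      by (intro sum.cong refl T_term) auto
    also have "\<dots> = (\<Sum>m\<le>n. real (n choose m) * u m * Tsum (n - m) k a z)"
      unfolding Tsum_def by (simp add: sum_distrib_left)
    also have "\<dots> = (\<Sum>m\<le>n. real (n choose m) * u m *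
        (\<Sum>j\<le>n. c j * ffr (n - m) j * z^j * (A' + real (n - m) * z)^(n - m - j)))"
    proof (intro sum.cong refl)
      fix m assume m: "m \<in> {..n}"
      have "(\<Sum>j\<le>n. c j * ffr (n - m) j * z^j * (A' + real (n - m) * z)^(n - m - j)) =
            (\<Sum>j\<le>n - m. c j * ffr (n - m) j * z^j * (A' + real (n - m) * z)^(n - m - j))"
        by (rule sum.mono_neutral_right) (auto simp: ffr_def)
      then show "real (n choose m) * u m * Tsum (n - m) k a z = real (n choose m) * u m *
        (\<Sum>j\<le>n. c j * ffr (n - m) j * z^j * (A' + real (n - m) * z)^(n - m - j))"
        using Suc.IH[OF k1, of "n - m"] unfolding c_def A'_def by simp
    qed
    also have "\<dots> = (\<Sum>j\<le>n. c j * z^j * (\<Sum>m\<le>n. real (n choose m) * ffr (n - m) j * u m * (A' + real (n - m) * z)^(n - m - j)))"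
    proof -
      have "(\<Sum>m\<le>n. real (n choose m) * u m *
        (\<Sum>j\<le>n. c j * ffr (n - m) j * z^j * (A' + real (n - m) * z)^(n - m - j))) =
        (\<Sum>m\<le>n. \<Sum>j\<le>n. c j * z^j * (real (n choose m) * ffr (n - m) j * u m * (A' + real (n - m) * z)^(n - m - j)))"
        by (simp add: sum_distrib_left mult_ac)
      also have "\<dots> = (\<Sum>j\<le>n. \<Sum>m\<le>n. c j * z^j * (real (n choose m) * ffr (n - m) j * u m * (A' + real (n - m) * z)^(n - m - j)))"
        by (rule sum.swap)
      finally show ?thesis by (simp add: sum_distrib_left)
    qed
    also have "\<dots> = (\<Sum>j\<le>n. c j * z^j * (ffr n j * FA z (n - j) (a (Suc k)) (A' + real j * z)))"
    proof (intro sum.cong refl)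
      fix j assume j: "j \<in> {..n}"
      have "(\<Sum>m\<le>n. real (n choose m) * ffr (n - m) j * u m * (A' + real (n - m) * z)^(n - m - j))
         = (\<Sum>m\<le>n. ffr n j * (real ((n - j) choose m) * u m * ((A' + real j * z) + z * real (n - j - m))^(n - j - m)))"
      proof (intro sum.cong refl)
        fix m assume m: "m \<in> {..n}"
        show "real (n choose m) * ffr (n - m) j * u m * (A' + real (n - m) * z)^(n - m - j) =
           ffr n j * (real ((n - j) choose m) * u m * ((A' + real j * z) + z * real (n - j - m))^(n - j - m))"
        proof (cases "m \<le> n - j")
          case True
          have e: "A' + real (n - m) * z = (A' + real j * z) + z * real (n - j - m)"
            using True j by (simp add: of_nat_diff algebra_simps)
          have e2: "n - m - j = n - j - m" by simp
          show ?thesis unfolding e e2 using binom_ffr[of m n j] m j by simp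
        next
          case False
          then have "\<not> j \<le> n - m" using m j by auto
          then show ?thesis using False by (simp add: ffr_def)
        qed
      qed
      also have "\<dots> = ffr n j * FA z (n - j) (a (Suc k)) (A' + real j * z)"
      proof -
        have "(\<Sum>m\<le>n. real ((n - j) choose m) * u m * ((A' + real j * z) + z * real (n - j - m))^(n - j - m)) =
              (\<Sum>m\<le>n - j. real ((n - j) choose m) * u m * ((A' + real j * z) + z * real (n - j - m))^(n - j - m))"
          by (rule sum.mono_neutral_right) auto
        then show ?thesis unfolding FA_def u_def by (simp only: sum_distrib_left[symmetric])
      qed
      finally show "c j * z^j * (\<Sum>m\<le>n. real (n choose m) * ffr (n - m) j * u m * (A' + real (n - m) * z)^(n - m - j)) =
          c j * z^j * (ffr n j * FA z (n - j) (a (Suc k)) (A' + real j * z))" by simp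
    qed
    also have "\<dots> = (\<Sum>j\<le>n. \<Sum>l\<le>n - j. c j * ffr n (j + l) * z^(j + l) * ((\<Sum>i=1..Suc k. a i) + real n * z)^(n - (j + l)))"
    proof (intro sum.cong refl)
      fix j assume j: "j \<in> {..n}"
      have X: "a (Suc k) + (A' + real j * z) + real (n - j) * z = (\<Sum>i=1..Suc k. a i) + real n * z"
        using j by (simp add: A'_def of_nat_diff algebra_simps)
      show "c j * z^j * (ffr n j * FA z (n - j) (a (Suc k)) (A' + real j * z)) =
        (\<Sum>l\<le>n - j. c j * ffr n (j + l) * z^(j + l) * ((\<Sum>i=1..Suc k. a i) + real n * z)^(n - (j + l)))"
        unfolding Abel2 GA_def X sum_distrib_left
      proof (intro sum.cong refl)
        fix l assume l: "l \<in> {..n - j}"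
        have "ffr n j * ffr (n - j) l = ffr n (j + l)" using j by (simp add: ffr_mult)
        then show "c j * z^j * (ffr n j * (ffr (n - j) l * z^l * ((\<Sum>i=1..Suc k. a i) + real n * z)^(n - j - l))) =
          c j * ffr n (j + l) * z^(j + l) * ((\<Sum>i=1..Suc k. a i) + real n * z)^(n - (j + l))"
          by (simp add: power_add diff_diff_add mult_ac)
      qed
    qed
    also have "\<dots> = (\<Sum>s\<le>n. \<Sum>j\<le>s. c j * ffr n s * z^s * ((\<Sum>i=1..Suc k. a i) + real n * z)^(n - s))"
      by (rule tri)
    also have "\<dots> = (\<Sum>s\<le>n. real ((s + Suc k - 2) choose s) * ffr n s * z^s * ((\<Sum>i=1..Suc k. a i) + real n * z)^(n - s))"
    proof (intro sum.cong refl)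
      fix s
      have "(\<Sum>j\<le>s. c j) = real ((s + Suc k - 2) choose s)"
        unfolding c_def using hockey[OF k1, of s] by (simp flip: of_nat_sum)
      then show "(\<Sum>j\<le>s. c j * ffr n s * z^s * ((\<Sum>i=1..Suc k. a i) + real n * z)^(n - s)) =
        real ((s + Suc k - 2) choose s) * ffr n s * z^s * ((\<Sum>i=1..Suc k. a i) + real n * z)^(n - s)"
        by (simp flip: sum_distrib_right)
    qed
    finally show ?thesis .
  qed
qed


lemma geo_tel:
  fixes t :: real
  shows "(1 - t) * (\<Sum>j\<le>N. real ((j + Suc d - 1) choose j) * t^j) + real ((N + d) choose N) * t^(Suc N)
     = (\<Sum>j\<le>N. real ((j + d - 1) choose j) * t^j)"
proof (induction N)
  case 0
  then show ?case by (simp add: algebra_simps)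
next
  case (Suc N)
  have p: "(Suc N + d) choose Suc N = ((N + d) choose N) + ((N + d) choose Suc N)"
    by simp
  have q: "Suc N + Suc d - 1 = Suc N + d" "Suc N + d - 1 = N + d" by simp_all
  define S where "S = (\<Sum>j\<le>N. real ((j + Suc d - 1) choose j) * t^j)"
  define R where "R = (\<Sum>j\<le>N. real ((j + d - 1) choose j) * t^j)"
  define T where "T = t ^ Suc N"
  define a where "a = real ((N + d) choose N)"
  define b where "b = real ((N + d) choose Suc N)"
  have IH: "(1 - t) * S + a * T = R" using Suc.IH unfolding S_def R_def T_def a_def by simp
  have key: "(1 - t) * (S + (a + b) * T) + (a + b) * (t * T) = R + b * T"
    using IH by (simp add: algebra_simps)
  have e1: "(\<Sum>j\<le>Suc N. real ((j + Suc d - 1) choose j) * t^j) = S + (a + b) * T"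
    unfolding S_def a_def b_def T_def sum.atMost_Suc q p by simp
  have e2: "(\<Sum>j\<le>Suc N. real ((j + d - 1) choose j) * t^j) = R + b * T"
    unfolding R_def b_def T_def sum.atMost_Suc q by simp
  have e3: "real ((Suc N + d) choose Suc N) * t ^ Suc (Suc N) = (a + b) * (t * T)"
    unfolding a_def b_def T_def p by simp
  show ?case unfolding e1 e2 e3 using key .
qed

lemma geo:
  fixes t :: real
  assumes "0 \<le> t" "t < 1"
  shows "(\<Sum>j\<le>N. real ((j + d - 1) choose j) * t^j) \<le> 1 / (1 - t)^d"
proof (induction d)
  case 0
  have "(\<Sum>j\<le>N. real ((j + 0 - 1) choose j) * t^j) = (\<Sum>j\<le>N. if j = 0 then 1 else 0)"
    by (intro sum.cong refl) auto
  then show ?case by simp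
next
  case (Suc d)
  have pos: "1 - t > 0" using assms by simp
  have "(1 - t) * (\<Sum>j\<le>N. real ((j + Suc d - 1) choose j) * t^j) \<le> (\<Sum>j\<le>N. real ((j + d - 1) choose j) * t^j)"
  proof -
    have "0 \<le> real ((N+d) choose N) * t^Suc N" using assms by simp
    then show ?thesis using geo_tel[of t d N] by linarith
  qed
  also have "\<dots> \<le> 1 / (1 - t)^d" by (rule Suc.IH)
  finally have "(1 - t) * (\<Sum>j\<le>N. real ((j + Suc d - 1) choose j) * t^j) \<le> 1 / (1 - t)^d" .
  then show ?case using pos by (simp add: field_simps)
qed

lemma ffr_le: "ffr n j \<le> real n ^ j"
proof (cases "j \<le> n")
  case True
  have d: "fact (n - j) dvd (fact n :: nat)" using True by (simp add: fact_dvd)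
  have "ffr n j = real (fact n div fact (n - j))"
    using True d by (simp add: ffr_def real_of_nat_div)
  also have "\<dots> \<le> real (n ^ j)" by (intro of_nat_mono fact_div_fact_le_pow True)
  finally show ?thesis by simp
next
  case False
  then show ?thesis by (simp add: ffr_def)
qed

lemma factor_bound:
  fixes t p q :: real and x :: nat
  assumes t: "0 \<le> t" "t \<le> 1" and p: "p \<ge> 0" and q: "q \<ge> 0" and xq: "x = 0 \<longleftrightarrow> q = 0"
  shows "p ^ x * exp (if q = 0 then 0 else t * real x * ln (q / p)) \<le> ((1 - t) * p + t * q) ^ x"
proof (cases "x = 0")
  case True
  then show ?thesis using xq by simp
next
  case False
  then have q0: "q > 0" using xq q by auto
  show ?thesis
  proof (cases "p = 0")
    case True
    then show ?thesis using False t q by simp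
  next
    case False
    then have p0: "p > 0" using p by simp
    have "exp (t * real x * ln (q / p)) = exp (t * ln (q / p)) ^ x"
      by (simp add: exp_of_nat_mult[symmetric] mult_ac)
    then have "p ^ x * exp (if q = 0 then 0 else t * real x * ln (q / p)) = (p * exp (t * ln (q / p))) ^ x"
      using q0 by (simp add: power_mult_distrib)
    also have "p * exp (t * ln (q / p)) = q powr t * p powr (1 - t)"
    proof -
      have "p * exp (t * ln (q / p)) = exp (ln p) * exp (t * (ln q - ln p))"
        using p0 q0 by (simp add: ln_div)
      also have "\<dots> = exp (ln p + t * (ln q - ln p))" by (rule exp_add[symmetric])
      also have "\<dots> = exp (t * ln q + (1 - t) * ln p)" by (rule arg_cong[where f = exp]) (simp add: algebra_simps)
      also have "\<dots> = exp (t * ln q) * exp ((1 - t) * ln p)" by (rule exp_add)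
      also have "\<dots> = q powr t * p powr (1 - t)"
        using p0 q0 by (simp add: powr_def mult_ac)
      finally show ?thesis .
    qed
    also have "(q powr t * p powr (1 - t)) ^ x \<le> ((1 - t) * p + t * q) ^ x"
    proof (rule power_mono)
      show "q powr t * p powr (1 - t) \<le> (1 - t) * p + t * q"
        using Youngs_inequality_0[of t "1 - t" q p] t p0 q0 by simp
    qed simp
    finally show ?thesis .
  qed
qed

lemma pmf_nonneg:
  assumes "\<forall>i\<in>{1..k}. p i \<ge> 0"
  shows "multinomial_pmf n k p x \<ge> 0"
  unfolding multinomial_pmf_def using assms by (intro mult_nonneg_nonneg divide_nonneg_nonneg prod_nonneg) auto

lemma term_bound:
  assumes n: "n \<ge> 1" and p: "\<forall>i\<in>{1..k}. p i \<ge> 0" and t: "0 \<le> t" "t \<le> 1"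
  shows "multinomial_pmf n k p x * exp (t * real n * V_stat n k p x) \<le>
    fact n / (\<Prod>i=1..k. fact (x i)) * (\<Prod>i=1..k. ((1 - t) * p i + t * (real (x i) / real n))^(x i))"
proof -
  have n0: "real n > 0" using n by simp
  have V: "t * real n * V_stat n k p x = (\<Sum>i=1..k. if real (x i) / real n = 0 then 0 else t * real (x i) * ln ((real (x i) / real n) / p i))"
    unfolding V_stat_def KL_div_def sum_distrib_left
    by (intro sum.cong refl) (use n0 in auto)
  have "multinomial_pmf n k p x * exp (t * real n * V_stat n k p x) =
     fact n / (\<Prod>i=1..k. fact (x i)) * (\<Prod>i=1..k. p i ^ x i * exp (if real (x i) / real n = 0 then 0 else t * real (x i) * ln ((real (x i) / real n) / p i)))"
    unfolding V exp_sum[OF finite_atLeastAtMost] multinomial_pmf_def prod.distrib by (simp add: mult_ac)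
  also have "\<dots> \<le> fact n / (\<Prod>i=1..k. fact (x i)) * (\<Prod>i=1..k. ((1 - t) * p i + t * (real (x i) / real n))^(x i))"
  proof (rule mult_left_mono)
    show "0 \<le> fact n / (\<Prod>i=1..k. fact (x i) :: real)" by (intro divide_nonneg_nonneg prod_nonneg) auto
    show "(\<Prod>i=1..k. p i ^ x i * exp (if real (x i) / real n = 0 then 0 else t * real (x i) * ln ((real (x i) / real n) / p i)))
       \<le> (\<Prod>i=1..k. ((1 - t) * p i + t * (real (x i) / real n))^(x i))"
    proof (rule prod_mono, rule conjI)
      fix i assume i: "i \<in> {1..k}"
      show "0 \<le> p i ^ x i * exp (if real (x i) / real n = 0 then 0 else t * real (x i) * ln ((real (x i) / real n) / p i))"
        using p i by simp
      show "p i ^ x i * exp (if real (x i) / real n = 0 then 0 else t * real (x i) * ln ((real (x i) / real n) / p i))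
         \<le> ((1 - t) * p i + t * (real (x i) / real n))^(x i)"
        by (rule factor_bound) (use t p i n0 in auto)
    qed
  qed
  finally show ?thesis .
qed

theorem theorem1p2:
  fixes n k :: nat and p :: "nat \<Rightarrow> real" and eps :: real
  assumes "n \<ge> 1" and "k \<ge> 2"
    and "\<forall>i\<in>{1..k}. p i \<ge> 0" and "(\<Sum>i=1..k. p i) = 1"
    and "eps > (real k - 1) / real n"
  shows "prob_V_ge n k p eps \<le>
           exp (- real n * eps) * (exp 1 * eps * real n / (real k - 1)) ^ (k - 1)"
proof -
  note n = assms(1) and k = assms(2) and p = assms(3) and ps = assms(4) and e = assms(5)
  have n0: "real n > 0" using n by simp
  have k1: "real k - 1 \<ge> 1" using k by simp
  have ne: "real n * eps > real k - 1" using e n0 by (simp add: field_simps)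
  have ne0: "real n * eps > 0" using ne k1 by linarith
  define t where "t = 1 - (real k - 1) / (real n * eps)"
  have r0: "(real k - 1) / (real n * eps) > 0" using k1 ne0 by simp
  have r1: "(real k - 1) / (real n * eps) < 1" using ne ne0 by simp
  have t0: "0 < t" and t1: "t < 1" using r0 r1 unfolding t_def by simp_all
  define a where "a i = (1 - t) * p i" for i
  define z where "z = t / real n"
  have "prob_V_ge n k p eps \<le> (\<Sum>x\<in>count_vectors n k. multinomial_pmf n k p x * exp (t * real n * (V_stat n k p x - eps)))"
    unfolding prob_V_ge_def
  proof (rule sum_mono)
    fix x
    have pm: "multinomial_pmf n k p x \<ge> 0" using pmf_nonneg p by blast
    show "(if eps \<le> V_stat n k p x then multinomial_pmf n k p x else 0) \<le> multinomial_pmf n k p x * exp (t * real n * (V_stat n k p x - eps))"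
    proof (cases "eps \<le> V_stat n k p x")
      case True
      then have "exp (t * real n * (V_stat n k p x - eps)) \<ge> 1" using t0 n0 by simp
      then have "multinomial_pmf n k p x * 1 \<le> multinomial_pmf n k p x * exp (t * real n * (V_stat n k p x - eps))"
        using pm by (intro mult_left_mono) auto
      then show ?thesis using True by simp
    qed (use pm in simp)
  qed
  also have "\<dots> = exp (- t * real n * eps) * (\<Sum>x\<in>count_vectors n k. multinomial_pmf n k p x * exp (t * real n * V_stat n k p x))"
    unfolding sum_distrib_left
  proof (intro sum.cong refl)
    fix x
    have "exp (t * real n * (V_stat n k p x - eps)) = exp (- t * real n * eps) * exp (t * real n * V_stat n k p x)"
      by (simp add: exp_add[symmetric] algebra_simps)
    then show "multinomial_pmf n k p x * exp (t * real n * (V_stat n k p x - eps)) =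
      exp (- t * real n * eps) * (multinomial_pmf n k p x * exp (t * real n * V_stat n k p x))" by simp
  qed
  also have "\<dots> \<le> exp (- t * real n * eps) * Tsum n k a z"
  proof (rule mult_left_mono)
    show "(\<Sum>x\<in>count_vectors n k. multinomial_pmf n k p x * exp (t * real n * V_stat n k p x)) \<le> Tsum n k a z"
      unfolding Tsum_def
    proof (rule sum_mono)
      fix x
      have "(\<Prod>i=1..k. ((1 - t) * p i + t * (real (x i) / real n))^(x i)) = (\<Prod>i=1..k. (a i + z * real (x i))^(x i))"
        unfolding a_def z_def by (intro prod.cong refl) simp
      then show "multinomial_pmf n k p x * exp (t * real n * V_stat n k p x) \<le>
        fact n / (\<Prod>i=1..k. fact (x i)) * (\<Prod>i=1..k. (a i + z * real (x i))^(x i))"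
        using term_bound[OF n p, of t x] t0 t1 by simp
    qed
  qed simp
  also have "Tsum n k a z = (\<Sum>j\<le>n. real ((j + k - 2) choose j) * ffr n j * z^j)"
  proof -
    have A: "(\<Sum>i=1..k. a i) + real n * z = 1"
      unfolding a_def z_def using ps n0 by (simp add: sum_distrib_left[symmetric])
    show ?thesis using Tid[of k n a z] k unfolding A by simp
  qed
  also have "(\<Sum>j\<le>n. real ((j + k - 2) choose j) * ffr n j * z^j) \<le> (\<Sum>j\<le>n. real ((j + (k - 1) - 1) choose j) * t^j)"
  proof (rule sum_mono)
    fix j
    have e: "j + k - 2 = j + (k - 1) - 1" using k by arith
    have "ffr n j * z^j \<le> real n ^ j * z^j"
      using ffr_le[of n j] t0 n0 unfolding z_def by (intro mult_right_mono) auto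
    also have "\<dots> = t^j" unfolding z_def using n0 by (simp add: power_divide)
    finally have "ffr n j * z^j \<le> t^j" .
    then show "real ((j + k - 2) choose j) * ffr n j * z^j \<le> real ((j + (k - 1) - 1) choose j) * t^j"
      unfolding e by (simp add: mult.assoc mult_left_mono)
  qed
  also have "\<dots> \<le> 1 / (1 - t)^(k - 1)" using geo[of t n "k - 1"] geo[of t "k - 1" n] t0 t1 by simp
  finally have B: "prob_V_ge n k p eps \<le> exp (- t * real n * eps) * (1 / (1 - t)^(k - 1))"
    using t0 by (simp add: mult_left_mono)
  have kk: "real (k - 1) = real k - 1" using k by (simp add: of_nat_diff)
  have "exp (- t * real n * eps) = exp (- real n * eps) * exp 1 ^ (k - 1)"
  proof -
    have "- t * real n * eps = - real n * eps + real (k - 1) * 1"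
    proof -
      have "t * (real n * eps) = real n * eps - (real k - 1)"
      proof -
        have nz: "real n * eps \<noteq> 0" using ne0 by linarith
        have "(real k - 1) / (real n * eps) * (real n * eps) = real k - 1" using nz by simp
        then show ?thesis unfolding t_def left_diff_distrib by simp
      qed
      then show ?thesis unfolding kk by (simp add: algebra_simps)
    qed
    then have "exp (- t * real n * eps) = exp (- real n * eps + real (k - 1) * 1)" by simp
    also have "\<dots> = exp (- real n * eps) * exp (real (k - 1) * 1)" by (rule exp_add)
    also have "\<dots> = exp (- real n * eps) * exp 1 ^ (k - 1)" by (simp only: exp_of_nat_mult)
    finally show ?thesis .
  qed
  moreover have "1 / (1 - t)^(k - 1) = (eps * real n / (real k - 1))^(k - 1)"
    unfolding t_def using k1 ne0 by (simp add: power_one_over[symmetric] mult.commute)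
  ultimately have "exp (- t * real n * eps) * (1 / (1 - t)^(k - 1)) =
      exp (- real n * eps) * (exp 1 * eps * real n / (real k - 1)) ^ (k - 1)"
    by (simp add: power_mult_distrib[symmetric] mult.assoc times_divide_eq_right)
  then show ?thesis using B by simp
qed

end
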